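(* Let $\Gamma$ be a distance-regular graph with diameter $D\ge 3$ and valency $k$, and assume $\Gamma$ is bipartite or almost bipartite. Then: (i) for every $\theta\in\mathbb{R}$ the pair $\theta,k$ is tight; (ii) for every $\theta\in\mathbb{R}$ the pair $\theta,-k$ is tight; (iii) $\Gamma$ has no further tight pairs, i.e. if $\theta,\theta'\in\mathbb{R}$ form a tight pair then at least one of $\theta,\theta'$ lies in $\{k,-k\}$.
   Context: $\Gamma$ is a finite connected undirected graph without loops or multiple edges, with path-length distance $\partial$ and diameter $D$; it is distance-regular with intersection numbers $a_i=p^i_{1i}$, $b_i=p^i_{1,i+1}$, $c_i=p^i_{1,i-1}$ (with $c_0=0$, $b_D=0$), valency $k=b_0$, and $c_i+a_i+b_i=k$ for $0\le i\le D$. $\Gamma$ is bipartite if $a_i=0$ for $0\le i\le D$; almost bipartite if $a_D\ne 0$ and $a_i=0$ for $0\le i\le D-1$. For $\theta\in\mathbb{R}$, the pseudo cosine sequence for $\theta$ is the unique sequence of reals $\sigma_0,\dots,\sigma_D$ with $\sigma_0=1$ and $c_i\sigma_{i-1}+a_i\sigma_i+b_i\sigma_{i+1}=\theta\sigma_i$ for $0\le i\le D-1$ ($\sigma_{-1}$ indeterminate, as $c_0=0$); then $\theta=k\sigma_1$. A sequence is a pseudo cosine sequence if it is the pseudo cosine sequence for some real $\theta$. Two pseudo cosine sequences $\sigma_0,\dots,\sigma_D$ and $\rho_0,\dots,\rho_D$ form a tight pair if $\sigma_0\rho_0,\sigma_1\rho_1,\dots,\sigma_D\rho_D$ is a pseudo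 cosine sequence. Two reals $\theta,\theta'$ form a tight pair if their pseudo cosine sequences form a tight pair. *)

theory Defs
  imports Complex_Main
begin

definition simple_graph :: "'a set \<Rightarrow> ('a \<Rightarrow> 'a \<Rightarrow> bool) \<Rightarrow> bool" where
  "simple_graph V E \<longleftrightarrow> finite V \<and> V \<noteq> {} \<and>
     (\<forall>x y. E x y \<longrightarrow> x \<in> V \<and> y \<in> V) \<and>
     (\<forall>x y. E x y \<longrightarrow> E y x) \<and> (\<forall>x. \<not> E x x)"

text \<open>A walk is a nonempty list of vertices with consecutive entries adjacent;
  its length is the number of edges, i.e. length of the list minus one.\<close>

definition walk :: "'a set \<Rightarrow> ('a \<Rightarrow> 'a \<Rightarrow> bool) \<Rightarrow> 'a list \<Rightarrow> bool" where
  "walk V E xs \<longleftrightarrow> xs \<noteq> [] \<and> set xs \<subseteq> V \<and>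
     (\<forall>i. Suc i < length xs \<longrightarrow> E (xs ! i) (xs ! Suc i))"

definition walk_betw :: "'a set \<Rightarrow> ('a \<Rightarrow> 'a \<Rightarrow> bool) \<Rightarrow> 'a \<Rightarrow> nat \<Rightarrow> 'a \<Rightarrow> bool" where
  "walk_betw V E x n y \<longleftrightarrow>
     (\<exists>xs. walk V E xs \<and> hd xs = x \<and> last xs = y \<and> length xs = Suc n)"

definition connected_graph :: "'a set \<Rightarrow> ('a \<Rightarrow> 'a \<Rightarrow> bool) \<Rightarrow> bool" where
  "connected_graph V E \<longleftrightarrow> (\<forall>x\<in>V. \<forall>y\<in>V. \<exists>n. walk_betw V E x n y)"

definition gdist :: "'a set \<Rightarrow> ('a \<Rightarrow> 'a \<Rightarrow> bool) \<Rightarrow> 'a \<Rightarrow> 'a \<Rightarrow> nat" where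
  "gdist V E x y = (LEAST n. walk_betw V E x n y)"

definition diameter :: "'a set \<Rightarrow> ('a \<Rightarrow> 'a \<Rightarrow> bool) \<Rightarrow> nat" where
  "diameter V E = Max {gdist V E x y | x y. x \<in> V \<and> y \<in> V}"

text \<open>drg V E D a b c: (V,E) is a finite connected simple graph of diameter D
  which is distance-regular with intersection numbers
  a i = p^i_{1i}, b i = p^i_{1,i+1}, c i = p^i_{1,i-1}, i.e. for all vertices x, y
  at distance i, the number of neighbours z of y at distance i-1 / i / i+1 from x
  equals c i / a i / b i respectively.  (Then c 0 = 0 and b D = 0 automatically;
  the valency is k = b 0.)\<close>

definition drg :: "'a set \<Rightarrow> ('a \<Rightarrow> 'a \<Rightarrow> bool) \<Rightarrow> nat \<Rightarrow>
    (nat \<Rightarrow> nat) \<Rightarrow> (nat \<Rightarrow> nat) \<Rightarrow> (nat \<Rightarrow> nat) \<Rightarrow> bool" where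
  "drg V E D a b c \<longleftrightarrow> simple_graph V E \<and> connected_graph V E \<and> D = diameter V E \<and>
     (\<forall>x\<in>V. \<forall>y\<in>V.
        card {z. E y z \<and> gdist V E x z + 1 = gdist V E x y} = c (gdist V E x y) \<and>
        card {z. E y z \<and> gdist V E x z = gdist V E x y} = a (gdist V E x y) \<and>
        card {z. E y z \<and> gdist V E x z = gdist V E x y + 1} = b (gdist V E x y))"

definition bipartite_drg :: "nat \<Rightarrow> (nat \<Rightarrow> nat) \<Rightarrow> bool" where
  "bipartite_drg D a \<longleftrightarrow> (\<forall>i\<le>D. a i = 0)"

definition almost_bipartite_drg :: "nat \<Rightarrow> (nat \<Rightarrow> nat) \<Rightarrow> bool" where
  "almost_bipartite_drg D a \<longleftrightarrow> a D \<noteq> 0 \<and> (\<forall>i<D. a i = 0)"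

text \<open>sigma (restricted to 0..D) is the pseudo cosine sequence for theta.
  The term c_0 sigma_{-1} is omitted for i = 0 (c_0 = 0).\<close>

definition pseudo_cosine_for :: "nat \<Rightarrow> (nat \<Rightarrow> nat) \<Rightarrow> (nat \<Rightarrow> nat) \<Rightarrow> (nat \<Rightarrow> nat) \<Rightarrow>
    real \<Rightarrow> (nat \<Rightarrow> real) \<Rightarrow> bool" where
  "pseudo_cosine_for D a b c \<theta> \<sigma> \<longleftrightarrow> \<sigma> 0 = 1 \<and>
     (\<forall>i<D. (if i = 0 then 0 else real (c i) * \<sigma> (i - 1)) + real (a i) * \<sigma> i
              + real (b i) * \<sigma> (Suc i) = \<theta> * \<sigma> i)"

definition pseudo_cosine :: "nat \<Rightarrow> (nat \<Rightarrow> nat) \<Rightarrow> (nat \<Rightarrow> nat) \<Rightarrow> (nat \<Rightarrow> nat) \<Rightarrow>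
    (nat \<Rightarrow> real) \<Rightarrow> bool" where
  "pseudo_cosine D a b c \<sigma> \<longleftrightarrow> (\<exists>\<theta>. pseudo_cosine_for D a b c \<theta> \<sigma>)"

definition tight_seq :: "nat \<Rightarrow> (nat \<Rightarrow> nat) \<Rightarrow> (nat \<Rightarrow> nat) \<Rightarrow> (nat \<Rightarrow> nat) \<Rightarrow>
    (nat \<Rightarrow> real) \<Rightarrow> (nat \<Rightarrow> real) \<Rightarrow> bool" where
  "tight_seq D a b c \<sigma> \<rho> \<longleftrightarrow> pseudo_cosine D a b c \<sigma> \<and> pseudo_cosine D a b c \<rho> \<and>
     pseudo_cosine D a b c (\<lambda>i. \<sigma> i * \<rho> i)"

text \<open>theta, theta' form a tight pair if their pseudo cosine sequences form a
  tight pair (these sequences are unique on 0..D in a distance-regular graph).\<close>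

definition tight_pair :: "nat \<Rightarrow> (nat \<Rightarrow> nat) \<Rightarrow> (nat \<Rightarrow> nat) \<Rightarrow> (nat \<Rightarrow> nat) \<Rightarrow>
    real \<Rightarrow> real \<Rightarrow> bool" where
  "tight_pair D a b c \<theta> \<theta>' \<longleftrightarrow>
     (\<exists>\<sigma> \<rho>. pseudo_cosine_for D a b c \<theta> \<sigma> \<and> pseudo_cosine_for D a b c \<theta>' \<rho> \<and>
             tight_seq D a b c \<sigma> \<rho>)"

end

theory Submission
  imports Defs
begin

locale sgraph =
  fixes V :: "'a set" and E :: "'a \<Rightarrow> 'a \<Rightarrow> bool"
  assumes sg: "simple_graph V E" and conn: "connected_graph V E"
begin

lemma finV: "finite V" using sg by (simp add: simple_graph_def)
lemma EV: "E x y \<Longrightarrow> x \<in> V \<and> y \<in> V" using sg by (simp add: simple_graph_def)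
lemma Esym: "E x y \<Longrightarrow> E y x" using sg by (simp add: simple_graph_def)
lemma Eirr: "\<not> E x x" using sg by (simp add: simple_graph_def)

lemma wb0: "x \<in> V \<Longrightarrow> walk_betw V E x 0 x"
  unfolding walk_betw_def walk_def by (rule exI[of _ "[x]"]) auto

lemma wbV: "walk_betw V E x n y \<Longrightarrow> x \<in> V \<and> y \<in> V"
  unfolding walk_betw_def walk_def by (metis hd_in_set last_in_set subsetD)

lemma wb0_eq: "walk_betw V E x 0 y \<Longrightarrow> x = y"
  unfolding walk_betw_def by (metis One_nat_def length_0_conv length_Suc_conv last_ConsL list.sel(1))

lemma walk_snoc: assumes "walk V E xs" "E (last xs) z" shows "walk V E (xs @ [z])"
proof -
  have z: "z \<in> V" using EV assms(2) by blast
  have "E ((xs @ [z]) ! i) ((xs @ [z]) ! Suc i)" if "Suc i < length (xs @ [z])" for i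
  proof (cases "Suc i < length xs")
    case True then show ?thesis using assms(1) by (simp add: walk_def nth_append)
  next
    case False
    then have i: "i = length xs - 1" using that by simp
    have "xs \<noteq> []" using assms(1) unfolding walk_def by blast
    then have "xs ! i = last xs" using i by (simp add: last_conv_nth)
    moreover have "(xs @ [z]) ! Suc i = z" using i \<open>xs \<noteq> []\<close> by (simp add: nth_append)
    moreover have "i < length xs" using i \<open>xs \<noteq> []\<close> by simp
    ultimately show ?thesis using assms(2) by (simp add: nth_append)
  qed
  then show ?thesis using assms z unfolding walk_def by auto
qed

lemma wb_snoc: "walk_betw V E x n y \<Longrightarrow> E y z \<Longrightarrow> walk_betw V E x (Suc n) z"
  unfolding walk_betw_def
  by (metis walk_snoc hd_append2 last_snoc length_append_singleton walk_def)

lemma wb_pred: assumes "walk_betw V E x (Suc n) z" shows "\<exists>y. walk_betw V E x n y \<and> E y z"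
proof -
  obtain xs where xs: "walk V E xs" "hd xs = x" "last xs = z" "length xs = Suc (Suc n)"
    using assms unfolding walk_betw_def by blast
  define ys where "ys = butlast xs"
  have lys: "length ys = Suc n" using xs(4) ys_def by simp
  have ne: "ys \<noteq> []" using lys by auto
  have xsne: "xs \<noteq> []" using xs(4) by auto
  have xs_eq: "xs = ys @ [z]" using xs(3) ys_def append_butlast_last_id[OF xsne] by simp
  have w: "walk V E ys"
  proof -
    have "set ys \<subseteq> V" using xs(1) unfolding walk_def ys_def by (meson in_set_butlastD subset_iff)
    moreover have "E (ys ! i) (ys ! Suc i)" if "Suc i < length ys" for i
    proof -
      have "ys ! i = xs ! i" "ys ! Suc i = xs ! Suc i" using that ys_def by (simp_all add: nth_butlast)
      moreover have "Suc i < length xs" using that lys xs(4) by simp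
      ultimately show ?thesis using xs(1) unfolding walk_def by simp
    qed
    ultimately show ?thesis using ne unfolding walk_def by blast
  qed
  have "E (last ys) z"
  proof -
    have "E (xs ! n) (xs ! Suc n)" using xs(1) xs(4) unfolding walk_def by auto
    moreover have "xs ! n = last ys" using xs_eq lys by (simp add: nth_append last_conv_nth ne)
    moreover have "xs ! Suc n = z" using xs_eq lys by (simp add: nth_append)
    ultimately show ?thesis by simp
  qed
  moreover have "hd ys = x" using xs(2) xs_eq ne by simp
  ultimately show ?thesis using w lys unfolding walk_betw_def by blast
qed

lemma gd_wb: "x \<in> V \<Longrightarrow> y \<in> V \<Longrightarrow> walk_betw V E x (gdist V E x y) y"
  unfolding gdist_def using conn connected_graph_def by (metis LeastI_ex)

lemma gd_le: "walk_betw V E x n y \<Longrightarrow> gdist V E x y \<le> n"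
  unfolding gdist_def by (rule Least_le)

lemma gd0: "x \<in> V \<Longrightarrow> y \<in> V \<Longrightarrow> gdist V E x y = 0 \<longleftrightarrow> x = y"
  by (metis gd_wb wb0_eq gd_le wb0 le_zero_eq)

lemma gd_tri: "x \<in> V \<Longrightarrow> E y z \<Longrightarrow> gdist V E x z \<le> gdist V E x y + 1"
  by (metis EV gd_wb wb_snoc gd_le Suc_eq_plus1)

lemma gd_pred: assumes "x \<in> V" "z \<in> V" "gdist V E x z = Suc m"
  shows "\<exists>y. E y z \<and> gdist V E x y = m"
proof -
  obtain y where y: "walk_betw V E x m y" "E y z" using wb_pred gd_wb assms by metis
  have "gdist V E x y \<le> m" using gd_le y by blast
  moreover have "gdist V E x z \<le> gdist V E x y + 1" using gd_tri assms y by blast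
  ultimately show ?thesis using y assms by auto
qed

lemma down: "x \<in> V \<Longrightarrow> y \<in> V \<Longrightarrow> gdist V E x y = n \<Longrightarrow> i \<le> n \<Longrightarrow> \<exists>x\<in>V. \<exists>y\<in>V. gdist V E x y = i"
proof (induction n arbitrary: y)
  case 0 then show ?case by auto
next
  case (Suc n)
  show ?case
  proof (cases "i = Suc n")
    case True then show ?thesis using Suc.prems by blast
  next
    case False
    then have i: "i \<le> n" using Suc.prems(4) by simp
    obtain w where w: "E w y" "gdist V E x w = n" using gd_pred Suc.prems(1,2,3) by blast
    have "w \<in> V" using EV w(1) by blast
    then show ?thesis using Suc.IH[OF Suc.prems(1) _ w(2) i] by blast
  qed
qed

lemma dist_exists: assumes "i \<le> diameter V E"
  shows "\<exists>x\<in>V. \<exists>y\<in>V. gdist V E x y = i"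
proof -
  let ?S = "{gdist V E x y | x y. x \<in> V \<and> y \<in> V}"
  have "?S = (\<lambda>(x,y). gdist V E x y) ` (V \<times> V)" by auto
  then have fin: "finite ?S" using finV by simp
  obtain v where "v \<in> V" using sg unfolding simple_graph_def by blast
  then have ne: "?S \<noteq> {}" by blast
  have "diameter V E \<in> ?S" unfolding diameter_def by (rule Max_in[OF fin ne])
  then obtain x0 y0 where D: "x0 \<in> V" "y0 \<in> V" "gdist V E x0 y0 = diameter V E" by auto
  show ?thesis using down[OF D assms] .
qed

end

context sgraph begin

lemma gd_edge: "E y z \<Longrightarrow> gdist V E y z = 1"
proof -
  assume e: "E y z"
  have yz: "y \<in> V" "z \<in> V" using EV e by auto
  have "gdist V E y z \<le> gdist V E y y + 1" using gd_tri yz e by blast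
  moreover have "gdist V E y y = 0" using gd0 yz by blast
  moreover have "gdist V E y z \<noteq> 0"
  proof -
    have "y \<noteq> z" using Eirr e by blast
    then show ?thesis using gd0[OF yz] by simp
  qed
  ultimately show ?thesis by simp
qed

lemma nbr_split: assumes "x \<in> V" "y \<in> V"
  shows "card {z. E y z} = card {z. E y z \<and> gdist V E x z + 1 = gdist V E x y}
     + card {z. E y z \<and> gdist V E x z = gdist V E x y}
     + card {z. E y z \<and> gdist V E x z = gdist V E x y + 1}"
proof -
  let ?C = "{z. E y z \<and> gdist V E x z + 1 = gdist V E x y}"
  let ?A = "{z. E y z \<and> gdist V E x z = gdist V E x y}"
  let ?B = "{z. E y z \<and> gdist V E x z = gdist V E x y + 1}"
  have sub: "{z. E y z} \<subseteq> V" using EV by blast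
  have fN: "finite {z. E y z}" using finite_subset[OF sub finV] .
  have "?C \<subseteq> {z. E y z}" "?A \<subseteq> {z. E y z}" "?B \<subseteq> {z. E y z}" by blast+
  then have fin: "finite ?C" "finite ?A" "finite ?B" using finite_subset fN by metis+
  have eq: "{z. E y z} = ?C \<union> ?A \<union> ?B"
  proof (rule set_eqI, rule iffI)
    fix z assume "z \<in> {z. E y z}"
    then have e: "E y z" by simp
    have "gdist V E x z \<le> gdist V E x y + 1" using gd_tri[OF assms(1) e] .
    moreover have "gdist V E x y \<le> gdist V E x z + 1" using gd_tri[OF assms(1) Esym[OF e]] .
    ultimately have "gdist V E x z + 1 = gdist V E x y \<or> gdist V E x z = gdist V E x y
       \<or> gdist V E x z = gdist V E x y + 1" by linarith
    then show "z \<in> ?C \<union> ?A \<union> ?B" using e by blast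
  next
    fix z assume "z \<in> ?C \<union> ?A \<union> ?B"
    then show "z \<in> {z. E y z}" by blast
  qed
  have d1: "?C \<inter> ?A = {}" by (auto simp del: One_nat_def)
  have d2: "(?C \<union> ?A) \<inter> ?B = {}" by (auto simp del: One_nat_def)
  have c1: "card (?C \<union> ?A \<union> ?B) = card (?C \<union> ?A) + card ?B"
    using card_Un_disjoint[OF finite_UnI[OF fin(1) fin(2)] fin(3) d2] .
  have c2: "card (?C \<union> ?A) = card ?C + card ?A"
    using card_Un_disjoint[OF fin(1) fin(2) d1] .
  have c0: "card {z. E y z} = card (?C \<union> ?A \<union> ?B)" using arg_cong[OF eq, of card] .
  show ?thesis using c0 c1 c2 by linarith
qed

lemma deg: "y \<in> V \<Longrightarrow> card {z. E y z \<and> gdist V E y z = gdist V E y y + 1} = card {z. E y z}"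
proof -
  assume y: "y \<in> V"
  have "gdist V E y y = 0" using gd0 y by blast
  then have "{z. E y z \<and> gdist V E y z = gdist V E y y + 1} = {z. E y z}" using gd_edge by auto
  then show ?thesis by simp
qed

end

lemma drg_facts:
  assumes g: "drg V E D a b c" and D1: "D \<ge> 1"
  shows "c 1 = 1" "\<And>i. i \<le> D \<Longrightarrow> c i + a i + b i = b 0" "\<And>i. i < D \<Longrightarrow> b i > 0"
proof -
  note gg = g[unfolded drg_def]
  have sg: "simple_graph V E" using gg by (rule conjunct1)
  have cg: "connected_graph V E" using gg[THEN conjunct2] by (rule conjunct1)
  have Dd: "D = diameter V E" using gg[THEN conjunct2, THEN conjunct2] by (rule conjunct1)
  note reg = gg[THEN conjunct2, THEN conjunct2, THEN conjunct2]
  have regc: "c (gdist V E x y) = card {z. E y z \<and> gdist V E x z + 1 = gdist V E x y}"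
    if "x \<in> V" "y \<in> V" for x y
    using reg[rule_format, OF that] by (elim conjE) (rule sym)
  have rega: "a (gdist V E x y) = card {z. E y z \<and> gdist V E x z = gdist V E x y}"
    if "x \<in> V" "y \<in> V" for x y
    using reg[rule_format, OF that] by (elim conjE) (rule sym)
  have regb: "b (gdist V E x y) = card {z. E y z \<and> gdist V E x z = gdist V E x y + 1}"
    if "x \<in> V" "y \<in> V" for x y
    using reg[rule_format, OF that] by (elim conjE) (rule sym)
  interpret sgraph V E using sg cg by unfold_locales
  show "c i + a i + b i = b 0" if "i \<le> D" for i
  proof -
    have "i \<le> diameter V E" using that Dd by simp
    then obtain x y where xy: "x \<in> V" "y \<in> V" "gdist V E x y = i" using dist_exists by blast
    have g0: "gdist V E y y = 0" using gd0 xy(2) by blast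
    have "b 0 = card {z. E y z}" using regb[OF xy(2) xy(2)] deg[OF xy(2)] g0 by simp
    then show ?thesis using nbr_split[OF xy(1,2)] regc[OF xy(1,2)] rega[OF xy(1,2)] regb[OF xy(1,2)] xy(3)
      by simp
  qed
  show "b i > 0" if "i < D" for i
  proof -
    have "Suc i \<le> diameter V E" using that Dd by simp
    then obtain x z where xz: "x \<in> V" "z \<in> V" "gdist V E x z = Suc i" using dist_exists by blast
    obtain y where y: "E y z" "gdist V E x y = i" using gd_pred[OF xz] by blast
    have yV: "y \<in> V" using EV y by blast
    have "z \<in> {z. E y z \<and> gdist V E x z = gdist V E x y + 1}" using y xz(3) by simp
    moreover have "finite {z. E y z \<and> gdist V E x z = gdist V E x y + 1}"
      by (rule finite_subset[OF _ finV]) (use EV in auto)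
    ultimately have "card {z. E y z \<and> gdist V E x z = gdist V E x y + 1} > 0"
      using card_gt_0_iff by blast
    then show ?thesis using regb[OF xz(1) yV] y(2) by simp
  qed
  show "c 1 = 1"
  proof -
    have "Suc 0 \<le> diameter V E" using D1 Dd by simp
    then obtain x y where xy: "x \<in> V" "y \<in> V" "gdist V E x y = Suc 0" using dist_exists by blast
    obtain w where w: "E w y" "gdist V E x w = 0" using gd_pred[OF xy] by blast
    have "w \<in> V" using w EV by blast
    then have "w = x" using w(2) gd0 xy(1) by blast
    then have e: "E y x" using Esym[OF w(1)] by simp
    have "{z. E y z \<and> gdist V E x z + 1 = gdist V E x y} = {x}"
    proof (rule set_eqI)
      fix z show "z \<in> {z. E y z \<and> gdist V E x z + 1 = gdist V E x y} \<longleftrightarrow> z \<in> {x}"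
      proof
        assume "z \<in> {z. E y z \<and> gdist V E x z + 1 = gdist V E x y}"
        then have "E y z" "gdist V E x z = 0" using xy(3) by auto
        moreover have "z \<in> V" using EV \<open>E y z\<close> by blast
        ultimately have "x = z" using gd0[OF xy(1), of z] by blast
        then show "z \<in> {x}" by simp
      next
        assume "z \<in> {x}"
        then show "z \<in> {z. E y z \<and> gdist V E x z + 1 = gdist V E x y}"
          using e xy gd0[OF xy(1) xy(1)] by simp
      qed
    qed
    then show ?thesis using regc[OF xy(1,2)] xy(3) by simp
  qed
qed

fun pcs :: "(nat \<Rightarrow> nat) \<Rightarrow> (nat \<Rightarrow> nat) \<Rightarrow> (nat \<Rightarrow> nat) \<Rightarrow> real \<Rightarrow> nat \<Rightarrow> real \<times> real" where
  "pcs a b c \<theta> 0 = (1, (\<theta> - real (a 0)) / real (b 0))"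
| "pcs a b c \<theta> (Suc n) = (snd (pcs a b c \<theta> n),
     ((\<theta> - real (a (Suc n))) * snd (pcs a b c \<theta> n) - real (c (Suc n)) * fst (pcs a b c \<theta> n))
       / real (b (Suc n)))"

lemma pc_exists:
  assumes bpos: "\<And>i. i < D \<Longrightarrow> b i > 0"
  shows "pseudo_cosine_for D a b c \<theta> (\<lambda>i. fst (pcs a b c \<theta> i))"
  unfolding pseudo_cosine_for_def
proof (intro conjI allI impI)
  show "fst (pcs a b c \<theta> 0) = 1" by simp
  fix i assume i: "i < D"
  have bi: "real (b i) > 0" using bpos[OF i] by simp
  show "(if i = 0 then 0 else real (c i) * fst (pcs a b c \<theta> (i - 1))) + real (a i) * fst (pcs a b c \<theta> i)
        + real (b i) * fst (pcs a b c \<theta> (Suc i)) = \<theta> * fst (pcs a b c \<theta> i)"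
  proof (cases i)
    case 0
    then show ?thesis using bi by (simp add: field_simps)
  next
    case (Suc j)
    then show ?thesis using bi by (simp add: field_simps)
  qed
qed

lemma pcf_eq: "pseudo_cosine_for D a b c \<theta> \<sigma> \<Longrightarrow> i < D \<Longrightarrow>
   (if i = 0 then 0 else real (c i) * \<sigma> (i - 1)) + real (a i) * \<sigma> i + real (b i) * \<sigma> (Suc i) = \<theta> * \<sigma> i"
  unfolding pseudo_cosine_for_def by blast

lemma alg:
  fixes k s r t u v w th th' th'' :: real
  assumes "k * s = th" "k * r = th'" "k * (s * r) = th''"
    "1 + (k - 1) * u = th * s" "1 + (k - 1) * v = th' * r" "1 + (k - 1) * (u * v) = th'' * (s * r)"
  shows "th \<in> {k, -k} \<or> th' \<in> {k, -k}"
proof -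
  have "(k - 1) * ((k - 1) * (u * v)) = ((k - 1) * u) * ((k - 1) * v)" by (simp add: algebra_simps)
  then have "(k - 1) * (th'' * (s * r) - 1) = (th * s - 1) * (th' * r - 1)"
    using assms(4,5,6) by (smt (verit))
  note h = this[unfolded assms(1,2,3)[symmetric]]
  have "k * ((s * s - 1) * (r * r - 1)) = 0" using h by algebra
  then have "k = 0 \<or> s * s = 1 \<or> r * r = 1" by simp
  moreover have "s * s = 1 \<Longrightarrow> s = 1 \<or> s = -1"
    by (metis abs_of_nonneg abs_of_nonpos linorder_le_cases mult_minus_right mult_nonneg_nonneg
        mult_nonpos_nonpos square_eq_1_iff)
  moreover have "r * r = 1 \<Longrightarrow> r = 1 \<or> r = -1"
    by (metis square_eq_1_iff)
  ultimately show ?thesis using assms(1,2) by auto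
qed

theorem theorem5p3:
  fixes V :: "'a set" and E :: "'a \<Rightarrow> 'a \<Rightarrow> bool"
    and D :: nat and a b c :: "nat \<Rightarrow> nat"
  assumes "drg V E D a b c"
    and "D \<ge> 3"
    and "bipartite_drg D a \<or> almost_bipartite_drg D a"
  shows "(\<forall>\<theta>. tight_pair D a b c \<theta> (real (b 0)))
       \<and> (\<forall>\<theta>. tight_pair D a b c \<theta> (- real (b 0)))
       \<and> (\<forall>\<theta> \<theta>'. tight_pair D a b c \<theta> \<theta>' \<longrightarrow>
             \<theta> \<in> {real (b 0), - real (b 0)} \<or> \<theta>' \<in> {real (b 0), - real (b 0)})"
proof -
  have D1: "D \<ge> 1" using assms(2) by simp
  have c1: "c 1 = 1" using drg_facts[OF assms(1) D1] by blast
  have cab: "\<And>i. i \<le> D \<Longrightarrow> c i + a i + b i = b 0" using drg_facts[OF assms(1) D1] by blast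
  have bpos: "\<And>i. i < D \<Longrightarrow> b i > 0" using drg_facts[OF assms(1) D1] by blast
  have a0: "\<And>i. i < D \<Longrightarrow> a i = 0"
    using assms(3) unfolding bipartite_drg_def almost_bipartite_drg_def by auto
  have cabr: "real (c i) + real (b i) = real (b 0)" if "i < D" for i
  proof -
    have "c i + a i + b i = b 0" using cab that by simp
    then have "c i + b i = b 0" using a0[OF that] by simp
    then show ?thesis by (metis of_nat_add)
  qed
  let ?k = "real (b 0)"
  define pc where "pc = (\<lambda>\<theta> i. fst (pcs a b c \<theta> i))"
  have pcf: "pseudo_cosine_for D a b c \<theta> (pc \<theta>)" for \<theta>
    unfolding pc_def using pc_exists bpos by blast
  have one: "pseudo_cosine_for D a b c ?k (\<lambda>_. 1)"
    unfolding pseudo_cosine_for_def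
  proof (intro conjI allI impI)
    fix i assume i: "i < D"
    show "(if i = 0 then 0 else real (c i) * 1) + real (a i) * 1 + real (b i) * 1 = ?k * 1"
      using cabr[OF i] a0[OF i] by simp
  qed simp
  have alt: "pseudo_cosine_for D a b c (- ?k) (\<lambda>i. (-1) ^ i)"
    unfolding pseudo_cosine_for_def
  proof (intro conjI allI impI)
    fix i assume i: "i < D"
    show "(if i = 0 then 0 else real (c i) * (-1) ^ (i - 1)) + real (a i) * (-1) ^ i
       + real (b i) * (-1) ^ Suc i = - ?k * (-1) ^ i"
    proof (cases i)
      case 0 then show ?thesis using a0[OF i] by simp
    next
      case (Suc j)
      have "real (c i) * (-1) ^ j + real (b i) * (-1) ^ j = ?k * (-1) ^ j"
        using cabr[OF i] by (metis distrib_right)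
      then show ?thesis using a0[OF i] Suc by simp
    qed
  qed simp
  have altprod: "pseudo_cosine_for D a b c (- \<theta>) (\<lambda>i. \<sigma> i * (-1) ^ i)"
    if s: "pseudo_cosine_for D a b c \<theta> \<sigma>" for \<theta> \<sigma>
    unfolding pseudo_cosine_for_def
  proof (intro conjI allI impI)
    show "\<sigma> 0 * (-1) ^ 0 = 1" using s unfolding pseudo_cosine_for_def by simp
    fix i assume i: "i < D"
    have e: "(if i = 0 then 0 else real (c i) * \<sigma> (i - 1)) + real (a i) * \<sigma> i + real (b i) * \<sigma> (Suc i) = \<theta> * \<sigma> i"
      using pcf_eq[OF s i] .
    show "(if i = 0 then 0 else real (c i) * (\<sigma> (i - 1) * (-1) ^ (i - 1))) + real (a i) * (\<sigma> i * (-1) ^ i)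
       + real (b i) * (\<sigma> (Suc i) * (-1) ^ Suc i) = - \<theta> * (\<sigma> i * (-1) ^ i)"
    proof (cases i)
      case 0
      have "\<sigma> 0 = 1" using s unfolding pseudo_cosine_for_def by simp
      then show ?thesis using e a0[OF i] 0 by simp
    next
      case (Suc j)
      have e2: "real (c i) * \<sigma> j + real (b i) * \<sigma> (Suc i) = \<theta> * \<sigma> i"
        using e a0[OF i] Suc by simp
      have "(real (c i) * \<sigma> j + real (b i) * \<sigma> (Suc i)) * (-1) ^ j = (\<theta> * \<sigma> i) * (-1) ^ j"
        using e2 by simp
      then show ?thesis using a0[OF i] Suc by (simp add: algebra_simps)
    qed
  qed
  have part1: "\<forall>\<theta>. tight_pair D a b c \<theta> ?k"
  proof
    fix \<theta>
    have "tight_seq D a b c (pc \<theta>) (\<lambda>_. 1)"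
      unfolding tight_seq_def pseudo_cosine_def using pcf one by auto
    then show "tight_pair D a b c \<theta> ?k" unfolding tight_pair_def using pcf one by blast
  qed
  have part2: "\<forall>\<theta>. tight_pair D a b c \<theta> (- ?k)"
  proof
    fix \<theta>
    have "tight_seq D a b c (pc \<theta>) (\<lambda>i. (-1) ^ i)"
      unfolding tight_seq_def pseudo_cosine_def using pcf alt altprod[OF pcf] by blast
    then show "tight_pair D a b c \<theta> (- ?k)" unfolding tight_pair_def using pcf alt by blast
  qed
  have part3: "\<forall>\<theta> \<theta>'. tight_pair D a b c \<theta> \<theta>' \<longrightarrow> \<theta> \<in> {?k, - ?k} \<or> \<theta>' \<in> {?k, - ?k}"
  proof (intro allI impI)
    fix \<theta> \<theta>' assume "tight_pair D a b c \<theta> \<theta>'"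
    then obtain \<sigma> \<rho> \<theta>'' where s: "pseudo_cosine_for D a b c \<theta> \<sigma>"
      and r: "pseudo_cosine_for D a b c \<theta>' \<rho>"
      and t: "pseudo_cosine_for D a b c \<theta>'' (\<lambda>i. \<sigma> i * \<rho> i)"
      unfolding tight_pair_def tight_seq_def pseudo_cosine_def by blast
    have z: "0 < D" and o: "1 < D" using assms(2) by auto
    have s0: "\<sigma> 0 = 1" and r0: "\<rho> 0 = 1" using s r unfolding pseudo_cosine_for_def by auto
    have A0: "a 0 = 0" and A1: "a 1 = 0" using a0 z o by auto
    have b1: "real (b 1) = ?k - 1" using cabr[OF o] c1 by simp
    have s1: "?k * \<sigma> 1 = \<theta>" using pcf_eq[OF s z] s0 A0 by simp
    have r1: "?k * \<rho> 1 = \<theta>'" using pcf_eq[OF r z] r0 A0 by simp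
    have t1: "?k * (\<sigma> 1 * \<rho> 1) = \<theta>''" using pcf_eq[OF t z] s0 r0 A0 by simp
    have s2: "1 + (?k - 1) * \<sigma> 2 = \<theta> * \<sigma> 1" using pcf_eq[OF s o] s0 A1 c1 b1 by (simp add: numeral_2_eq_2)
    have r2: "1 + (?k - 1) * \<rho> 2 = \<theta>' * \<rho> 1" using pcf_eq[OF r o] r0 A1 c1 b1 by (simp add: numeral_2_eq_2)
    have t2: "1 + (?k - 1) * (\<sigma> 2 * \<rho> 2) = \<theta>'' * (\<sigma> 1 * \<rho> 1)"
      using pcf_eq[OF t o] s0 r0 A1 c1 b1 by (simp add: numeral_2_eq_2)
    show "\<theta> \<in> {?k, - ?k} \<or> \<theta>' \<in> {?k, - ?k}" using alg[OF s1 r1 t1 s2 r2 t2] .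
  qed
  show ?thesis using part1 part2 part3 by blast
qed

end
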